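(* Impose (A1)–(A6) and (A8') and fix $x\in\mathcal X$, $u\in[0,1]$. Then $\underline\Lambda(x,u)\le\Delta^{OO}_{Y^*}(x,u)\le\overline\Lambda(x,u)$, where (all functions at $(x,u)$): (i) under (A7.1): $\underline\Lambda=\frac{m_1^Y}{m_1^S}-\frac{m_0^Y-\underline y^*(-\Delta_S)}{m_1^S}$ and $\overline\Lambda=\frac{m_1^Y}{m_1^S}-\underline y^*$; (ii) under (A7.2): $\underline\Lambda=\frac{m_1^Y}{m_1^S}-\overline y^*$ and $\overline\Lambda=\frac{m_1^Y}{m_1^S}-\frac{m_0^Y-\overline y^*(-\Delta_S)}{m_1^S}$; (iii) under (A7.3) (sub-case (a) or (b)): $\underline\Lambda=\frac{m_1^Y}{m_1^S}-\min\left\{\frac{m_0^Y-\underline y^*(-\Delta_S)}{m_1^S},\overline y^*\right\}$ and $\overline\Lambda=\frac{m_1^Y}{m_1^S}-\max\left\{\frac{m_0^Y-\overline y^*(-\Delta_S)}{m_1^S},\underline y^*\right\}$.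
   Context: Standing setup. On a common probability space: $X$ (covariates, support $\mathcal X$), $Z$ (instrument, support $\mathcal Z$), $W=(X,Z)$; latent real random variables $U,V$, jointly continuously distributed conditional on $X$, with $U\mid X$ and $V\mid X$ each Uniform$[0,1]$ (their joint dependence unrestricted); real potential outcomes of interest $Y_0^*,Y_1^*$. Given functions $P:\mathcal X\times\mathcal Z\to[0,1]$ and $Q:\{0,1\}\times\mathcal X\to[0,1]$, define the treatment $D=\mathbf 1\{P(W)\ge U\}$, potential selection indicators $S_d=\mathbf 1\{Q(d,X)\ge V\}$ ($d\in\{0,1\}$), selection indicator $S=DS_1+(1-D)S_0$, potential observable outcomes $Y_d=S_dY_d^*$ and observable outcome $Y=DY_1+(1-D)Y_0$. For $x\in\mathcal X$, $u\in[0,1]$, $d\in\{0,1\}$: $m_d^Y(x,u)=\mathbb E[Y_d\mid X=x,U=u]$, $m_d^S(x,u)=\mathbb E[S_d\mid X=x,U=u]$, $\Delta_S(x,u)=m_1^S(x,u)-m_0^S(x,u)$, and $\Delta^{OO}_{Y^*}(x,u)=\mathbb E[Y_1^*-Y_0^*\mid X=x,U=u,S_0=1,S_1=1]$. Ratios appearing are assumed well defined (nonzero denominators). Assumptions: (A1) $Z$ is independent of $(U,V,Y_0^*,Y_1^* )$ conditional on $X$; (A2) the distribution of $P(W)$ given $X$ is nondegenerate; (A3) $\mathbb E|Y_d^*|<\infty$ and $\mathbb E[(Y_d^* )^2]<\infty$; (A4) $0<\mathbb P[D=1\mid X]<1$; (A5) $X$ is invariant to counterfactual manipulation of treatment; (A6)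 $Y_0^*,Y_1^*$ have a common support $\mathcal Y^*\subseteq\mathbb R$; $\underline y^*=\inf\mathcal Y^*$, $\overline y^*=\sup\mathcal Y^*$ (possibly infinite), known. Support cases: (A7.1) $\underline y^*>-\infty$, $\overline y^*=+\infty$, $\mathcal Y^*$ an interval; (A7.2) $\underline y^*=-\infty$, $\overline y^*<\infty$, $\mathcal Y^*$ an interval; (A7.3) both finite and either (a) $\mathcal Y^*$ an interval or (b) $\underline y^*,\overline y^*\in\mathcal Y^*$. (A8') (negative effect on selection) $Q(0,x)>Q(1,x)>0$ for all $x\in\mathcal X$. *)

theory Defs
  imports "HOL-Probability.Probability"
begin

text \<open>
  K x u is the conditional probability
  measure given X = x, U = u (a regular conditional probability on the sample
  space).  V is the latent selection variable, Ystar d is the potential outcome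
  of interest Y_d^*, Q d x is the selection threshold Q(d,x) for d in {0,1}.
\<close>

definition Spot :: "(nat \<Rightarrow> 'x \<Rightarrow> real) \<Rightarrow> ('a \<Rightarrow> real) \<Rightarrow> nat \<Rightarrow> 'x \<Rightarrow> 'a \<Rightarrow> real" where
  "Spot Q V d x \<omega> = (if Q d x \<ge> V \<omega> then 1 else 0)"

text \<open>m_d^Y(x,u) = E[Y_d | X=x,U=u] with Y_d = S_d Y_d^*\<close>
definition mY :: "('x \<Rightarrow> real \<Rightarrow> 'a measure) \<Rightarrow> (nat \<Rightarrow> 'x \<Rightarrow> real) \<Rightarrow> ('a \<Rightarrow> real)
    \<Rightarrow> (nat \<Rightarrow> 'a \<Rightarrow> real) \<Rightarrow> nat \<Rightarrow> 'x \<Rightarrow> real \<Rightarrow> real" where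
  "mY K Q V Ystar d x u = (\<integral>\<omega>. Spot Q V d x \<omega> * Ystar d \<omega> \<partial>(K x u))"

definition mS :: "('x \<Rightarrow> real \<Rightarrow> 'a measure) \<Rightarrow> (nat \<Rightarrow> 'x \<Rightarrow> real) \<Rightarrow> ('a \<Rightarrow> real)
    \<Rightarrow> nat \<Rightarrow> 'x \<Rightarrow> real \<Rightarrow> real" where
  "mS K Q V d x u = (\<integral>\<omega>. Spot Q V d x \<omega> \<partial>(K x u))"

definition DeltaS :: "('x \<Rightarrow> real \<Rightarrow> 'a measure) \<Rightarrow> (nat \<Rightarrow> 'x \<Rightarrow> real) \<Rightarrow> ('a \<Rightarrow> real)
    \<Rightarrow> 'x \<Rightarrow> real \<Rightarrow> real" where
  "DeltaS K Q V x u = mS K Q V 1 x u - mS K Q V 0 x u"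

definition pOO :: "('x \<Rightarrow> real \<Rightarrow> 'a measure) \<Rightarrow> (nat \<Rightarrow> 'x \<Rightarrow> real) \<Rightarrow> ('a \<Rightarrow> real)
    \<Rightarrow> 'x \<Rightarrow> real \<Rightarrow> real" where
  "pOO K Q V x u = (\<integral>\<omega>. Spot Q V 0 x \<omega> * Spot Q V 1 x \<omega> \<partial>(K x u))"

text \<open>Delta^{OO}_{Y^*}(x,u) = E[Y_1^* - Y_0^* | X=x, U=u, S_0=1, S_1=1]
  (elementary conditional expectation given an event of positive probability)\<close>
definition DeltaOO :: "('x \<Rightarrow> real \<Rightarrow> 'a measure) \<Rightarrow> (nat \<Rightarrow> 'x \<Rightarrow> real) \<Rightarrow> ('a \<Rightarrow> real)
    \<Rightarrow> (nat \<Rightarrow> 'a \<Rightarrow> real) \<Rightarrow> 'x \<Rightarrow> real \<Rightarrow> real" where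
  "DeltaOO K Q V Ystar x u =
     (\<integral>\<omega>. Spot Q V 0 x \<omega> * Spot Q V 1 x \<omega> * (Ystar 1 \<omega> - Ystar 0 \<omega>) \<partial>(K x u))
     / pOO K Q V x u"

end

theory Submission
  imports Defs
begin

lemma intf:
  fixes Y f :: "'a \<Rightarrow> real"
  assumes "prob_space M" "integrable M Y" "f \<in> borel_measurable M" "\<forall>\<omega>. 0 \<le> f \<omega> \<and> f \<omega> \<le> 1"
  shows "integrable M (\<lambda>\<omega>. f \<omega> * Y \<omega>)" "integrable M f"
proof -
  show "integrable M (\<lambda>\<omega>. f \<omega> * Y \<omega>)"
    apply (rule Bochner_Integration.integrable_bound[OF assms(2)])
    using assms(2,3) apply measurable
    using assms(4) by (auto simp: abs_mult intro!: AE_I2 mult_left_le_one_le)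
  interpret prob_space M by fact
  show "integrable M f"
    apply (rule integrable_const_bound[where B=1]) using assms by auto
qed

lemma lowb:
  fixes Y f :: "'a \<Rightarrow> real" and c :: real
  assumes "prob_space M" "integrable M Y" "f \<in> borel_measurable M" "\<forall>\<omega>. 0 \<le> f \<omega> \<and> f \<omega> \<le> 1"
    "AE \<omega> in M. c \<le> Y \<omega>"
  shows "c * (\<integral>\<omega>. f \<omega> \<partial>M) \<le> (\<integral>\<omega>. f \<omega> * Y \<omega> \<partial>M)"
proof -
  have "c * (\<integral>\<omega>. f \<omega> \<partial>M) = (\<integral>\<omega>. c * f \<omega> \<partial>M)" by simp
  also have "\<dots> \<le> (\<integral>\<omega>. f \<omega> * Y \<omega> \<partial>M)"
    apply (rule integral_mono_AE)
    using intf[OF assms(1-4)] apply auto[2]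
    using assms(5) apply eventually_elim
    using assms(4) by (metis mult.commute mult_left_mono)
  finally show ?thesis .
qed

lemma upb:
  fixes Y f :: "'a \<Rightarrow> real" and c :: real
  assumes "prob_space M" "integrable M Y" "f \<in> borel_measurable M" "\<forall>\<omega>. 0 \<le> f \<omega> \<and> f \<omega> \<le> 1"
    "AE \<omega> in M. Y \<omega> \<le> c"
  shows "(\<integral>\<omega>. f \<omega> * Y \<omega> \<partial>M) \<le> c * (\<integral>\<omega>. f \<omega> \<partial>M)"
proof -
  have "c * (\<integral>\<omega>. f \<omega> \<partial>M) = (\<integral>\<omega>. c * f \<omega> \<partial>M)" by simp
  moreover have "(\<integral>\<omega>. f \<omega> * Y \<omega> \<partial>M) \<le> (\<integral>\<omega>. c * f \<omega> \<partial>M)"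
    apply (rule integral_mono_AE)
    using intf[OF assms(1-4)] apply auto[2]
    using assms(5) apply eventually_elim
    using assms(4) by (metis mult.commute mult_left_mono)
  ultimately show ?thesis by simp
qed

theorem corollaryC1:
  fixes K :: "'x \<Rightarrow> real \<Rightarrow> 'a measure"
    and Q :: "nat \<Rightarrow> 'x \<Rightarrow> real"
    and V :: "'a \<Rightarrow> real"
    and Ystar :: "nat \<Rightarrow> 'a \<Rightarrow> real"
    and Ysup :: "real set"
    and XX :: "'x set"
    and x :: 'x and u :: real
  defines "ylo \<equiv> Inf (ereal ` Ysup)"
    and "yhi \<equiv> Sup (ereal ` Ysup)"
  assumes x_in: "x \<in> XX" and u_in: "u \<in> {0..1}"
    and Q_range: "\<forall>d\<in>{0,1}. \<forall>x'\<in>XX. Q d x' \<in> {0..1}"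
    and A8': "\<forall>x'\<in>XX. Q 0 x' > Q 1 x' \<and> Q 1 x' > 0"
    and prob: "prob_space (K x u)"
    and V_meas: "V \<in> borel_measurable (K x u)"
    and A3: "\<forall>d\<in>{0,1}. integrable (K x u) (Ystar d) \<and> integrable (K x u) (\<lambda>\<omega>. (Ystar d \<omega>)\<^sup>2)"
    and A6: "\<forall>d\<in>{0,1}. AE \<omega> in K x u. Ystar d \<omega> \<in> Ysup"
    and mS1_nz: "mS K Q V 1 x u \<noteq> 0"
    and pOO_nz: "pOO K Q V x u \<noteq> 0"
  shows
    "(ylo \<noteq> -\<infinity> \<and> yhi = \<infinity> \<and> is_interval Ysup \<longrightarrow>
        mY K Q V Ystar 1 x u / mS K Q V 1 x u
          - (mY K Q V Ystar 0 x u - real_of_ereal ylo * (- DeltaS K Q V x u)) / mS K Q V 1 x u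
          \<le> DeltaOO K Q V Ystar x u
        \<and> DeltaOO K Q V Ystar x u
          \<le> mY K Q V Ystar 1 x u / mS K Q V 1 x u - real_of_ereal ylo)
   \<and> (ylo = -\<infinity> \<and> yhi \<noteq> \<infinity> \<and> is_interval Ysup \<longrightarrow>
        mY K Q V Ystar 1 x u / mS K Q V 1 x u - real_of_ereal yhi
          \<le> DeltaOO K Q V Ystar x u
        \<and> DeltaOO K Q V Ystar x u
          \<le> mY K Q V Ystar 1 x u / mS K Q V 1 x u
             - (mY K Q V Ystar 0 x u - real_of_ereal yhi * (- DeltaS K Q V x u)) / mS K Q V 1 x u)
   \<and> (\<bar>ylo\<bar> \<noteq> \<infinity> \<and> \<bar>yhi\<bar> \<noteq> \<infinity>
        \<and> (is_interval Ysup \<or> (real_of_ereal ylo \<in> Ysup \<and> real_of_ereal yhi \<in> Ysup)) \<longrightarrow>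
        mY K Q V Ystar 1 x u / mS K Q V 1 x u
          - min ((mY K Q V Ystar 0 x u - real_of_ereal ylo * (- DeltaS K Q V x u)) / mS K Q V 1 x u)
                (real_of_ereal yhi)
          \<le> DeltaOO K Q V Ystar x u
        \<and> DeltaOO K Q V Ystar x u
          \<le> mY K Q V Ystar 1 x u / mS K Q V 1 x u
             - max ((mY K Q V Ystar 0 x u - real_of_ereal yhi * (- DeltaS K Q V x u)) / mS K Q V 1 x u)
                   (real_of_ereal ylo))"
proof -
  define M where "M = K x u"
  define S0 where "S0 = Spot Q V 0 x"
  define S1 where "S1 = Spot Q V 1 x"
  define p0 where "p0 = mS K Q V 0 x u"
  define p1 where "p1 = mS K Q V 1 x u"
  define m1 where "m1 = mY K Q V Ystar 1 x u"
  define b where "b = mY K Q V Ystar 0 x u"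
  define a where "a = (\<integral>\<omega>. S1 \<omega> * Ystar 0 \<omega> \<partial>M)"
  define D where "D = (\<lambda>\<omega>. S0 \<omega> - S1 \<omega>)"
  have P: "prob_space M" using prob M_def by simp
  interpret prob_space M by fact
  have q: "Q 0 x > Q 1 x" "Q 1 x > 0" using A8' x_in by auto
  have Sr: "\<forall>\<omega>. 0 \<le> Spot Q V d x \<omega> \<and> Spot Q V d x \<omega> \<le> 1" for d
    by (simp add: Spot_def)
  have Sm: "Spot Q V d x \<in> borel_measurable M" for d
    unfolding Spot_def[abs_def] M_def using V_meas by measurable
  have S01: "S0 \<omega> * S1 \<omega> = S1 \<omega>" for \<omega>
    using q by (auto simp: S0_def S1_def Spot_def)
  have Dr: "\<forall>\<omega>. 0 \<le> D \<omega> \<and> D \<omega> \<le> 1"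
    using q by (auto simp: D_def S0_def S1_def Spot_def)
  have Dm: "D \<in> borel_measurable M" unfolding D_def S0_def S1_def using Sm by measurable
  have I0: "integrable M (Ystar 0)" and I1: "integrable M (Ystar 1)" using A3 M_def by auto
  have iS1Y0: "integrable M (\<lambda>\<omega>. S1 \<omega> * Ystar 0 \<omega>)"
    using intf(1)[OF P I0 Sm Sr] S1_def by simp
  have iS1Y1: "integrable M (\<lambda>\<omega>. S1 \<omega> * Ystar 1 \<omega>)"
    using intf(1)[OF P I1 Sm Sr] S1_def by simp
  have iDY0: "integrable M (\<lambda>\<omega>. D \<omega> * Ystar 0 \<omega>)"
    using intf(1)[OF P I0 Dm Dr] by simp
  have iS0: "integrable M S0" using intf(2)[OF P I0 Sm Sr] S0_def by simp
  have iS1: "integrable M S1" using intf(2)[OF P I0 Sm Sr] S1_def by simp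
  have pOO: "pOO K Q V x u = p1"
  proof -
    have "(\<lambda>\<omega>. S0 \<omega> * S1 \<omega>) = S1" using S01 by auto
    then show ?thesis unfolding pOO_def p1_def mS_def S0_def S1_def M_def
      by (metis (no_types, lifting) ext)
  qed
  have p1nn: "p1 \<ge> 0" unfolding p1_def mS_def using Sr by (simp add: integral_nonneg)
  have p1pos: "p1 > 0" using p1nn pOO_nz pOO by simp
  have DOO: "DeltaOO K Q V Ystar x u = (m1 - a) / p1"
  proof -
    have "(\<integral>\<omega>. S0 \<omega> * S1 \<omega> * (Ystar 1 \<omega> - Ystar 0 \<omega>) \<partial>M)
        = (\<integral>\<omega>. S1 \<omega> * Ystar 1 \<omega> - S1 \<omega> * Ystar 0 \<omega> \<partial>M)"
    proof -
      have "(\<lambda>\<omega>. S0 \<omega> * S1 \<omega> * (Ystar 1 \<omega> - Ystar 0 \<omega>)) = (\<lambda>\<omega>. S1 \<omega> * Ystar 1 \<omega> - S1 \<omega> * Ystar 0 \<omega>)"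
      proof
        fix \<omega> show "S0 \<omega> * S1 \<omega> * (Ystar 1 \<omega> - Ystar 0 \<omega>) = S1 \<omega> * Ystar 1 \<omega> - S1 \<omega> * Ystar 0 \<omega>"
          using S01[of \<omega>] by (simp only: right_diff_distrib)
      qed
      then show ?thesis by simp
    qed
    also have "\<dots> = m1 - a"
      using iS1Y0 iS1Y1 by (simp add: m1_def a_def mY_def S1_def M_def)
    finally show ?thesis unfolding DeltaOO_def pOO
      by (simp add: S0_def S1_def M_def)
  qed
  have bda: "b - a = (\<integral>\<omega>. D \<omega> * Ystar 0 \<omega> \<partial>M)"
  proof -
    have "(\<integral>\<omega>. D \<omega> * Ystar 0 \<omega> \<partial>M) = (\<integral>\<omega>. S0 \<omega> * Ystar 0 \<omega> - S1 \<omega> * Ystar 0 \<omega> \<partial>M)"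
      by (simp add: D_def algebra_simps)
    also have "\<dots> = b - a"
    proof -
      have iS0Y0: "integrable M (\<lambda>\<omega>. S0 \<omega> * Ystar 0 \<omega>)"
        using intf(1)[OF P I0 Sm Sr] S0_def by simp
      show ?thesis using Bochner_Integration.integral_diff[OF iS0Y0 iS1Y0]
        by (simp add: b_def a_def mY_def S0_def M_def)
    qed
    finally show ?thesis by simp
  qed
  have pD: "p0 - p1 = (\<integral>\<omega>. D \<omega> \<partial>M)"
    using iS0 iS1 by (simp add: D_def p0_def p1_def mS_def S0_def S1_def M_def)
  have DS: "- DeltaS K Q V x u = p0 - p1" by (simp add: DeltaS_def p0_def p1_def)
  have AEY: "AE \<omega> in M. Ystar 0 \<omega> \<in> Ysup" using A6 M_def by auto
  have ne: "Ysup \<noteq> {}"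
  proof
    assume "Ysup = {}"
    then have "AE \<omega> in M. False" using AEY by simp
    then show False by simp
  qed
  have lo: "L * p1 \<le> a \<and> L * (p0 - p1) \<le> b - a" if "ylo = ereal L" for L
  proof -
    have AEL: "AE \<omega> in M. L \<le> Ystar 0 \<omega>"
      using AEY apply eventually_elim
      using that unfolding ylo_def by (metis INF_lower ereal_less_eq(3))
    show ?thesis
      using lowb[OF P I0 Sm[of 1] Sr[of 1] AEL] lowb[OF P I0 Dm Dr AEL] bda pD
      by (simp add: a_def p1_def mS_def S1_def M_def)
  qed
  have hi: "a \<le> H * p1 \<and> b - a \<le> H * (p0 - p1)" if "yhi = ereal H" for H
  proof -
    have AEL: "AE \<omega> in M. Ystar 0 \<omega> \<le> H"
      using AEY apply eventually_elim
      using that unfolding yhi_def by (metis SUP_upper ereal_less_eq(3))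
    show ?thesis
      using upb[OF P I0 Sm[of 1] Sr[of 1] AEL] upb[OF P I0 Dm Dr AEL] bda pD
      by (simp add: a_def p1_def mS_def S1_def M_def)
  qed
  have ylo_ne: "ylo \<noteq> \<infinity>"
  proof -
    obtain y where "y \<in> Ysup" using ne by auto
    then have "ylo \<le> ereal y" unfolding ylo_def by (simp add: INF_lower)
    then show ?thesis by auto
  qed
  have yhi_ne: "yhi \<noteq> -\<infinity>"
  proof -
    obtain y where "y \<in> Ysup" using ne by auto
    then have "ereal y \<le> yhi" unfolding yhi_def by (simp add: SUP_upper)
    then show ?thesis by auto
  qed
  have c1: "m1 / p1 - (b - L * (p0 - p1)) / p1 \<le> (m1 - a) / p1 \<and> (m1 - a) / p1 \<le> m1 / p1 - L"
    if "L * p1 \<le> a \<and> L * (p0 - p1) \<le> b - a" for L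
    using that p1pos by (simp add: divide_simps)
  have c2: "m1 / p1 - H \<le> (m1 - a) / p1 \<and> (m1 - a) / p1 \<le> m1 / p1 - (b - H * (p0 - p1)) / p1"
    if "a \<le> H * p1 \<and> b - a \<le> H * (p0 - p1)" for H
    using that p1pos by (simp add: divide_simps)
  have c3: "m1 / p1 - min ((b - L * (p0 - p1)) / p1) H \<le> (m1 - a) / p1
     \<and> (m1 - a) / p1 \<le> m1 / p1 - max ((b - H * (p0 - p1)) / p1) L"
    if "L * p1 \<le> a \<and> L * (p0 - p1) \<le> b - a" "a \<le> H * p1 \<and> b - a \<le> H * (p0 - p1)" for L H
    using c1[OF that(1)] c2[OF that(2)] by linarith
  have h0: "ylo \<noteq> -\<infinity> \<and> yhi = \<infinity> \<and> is_interval Ysup \<Longrightarrow> m1 / p1 - (b - real_of_ereal ylo * (p0 - p1)) / p1 \<le> (m1 - a) / p1 \<and> (m1 - a) / p1 \<le> m1 / p1 - real_of_ereal ylo"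
  proof -
    assume as: "ylo \<noteq> -\<infinity> \<and> yhi = \<infinity> \<and> is_interval Ysup"
    from as obtain L where L: "ylo = ereal L" using ylo_ne by (cases ylo) auto
    show "m1 / p1 - (b - real_of_ereal ylo * (p0 - p1)) / p1 \<le> (m1 - a) / p1 \<and> (m1 - a) / p1 \<le> m1 / p1 - real_of_ereal ylo"
      using c1[OF lo[OF L]] L by simp
  qed
  have h1: "ylo = -\<infinity> \<and> yhi \<noteq> \<infinity> \<and> is_interval Ysup \<Longrightarrow> m1 / p1 - real_of_ereal yhi \<le> (m1 - a) / p1 \<and> (m1 - a) / p1 \<le> m1 / p1 - (b - real_of_ereal yhi * (p0 - p1)) / p1"
  proof -
    assume as: "ylo = -\<infinity> \<and> yhi \<noteq> \<infinity> \<and> is_interval Ysup"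
    from as obtain H where H: "yhi = ereal H" using yhi_ne by (cases yhi) auto
    show "m1 / p1 - real_of_ereal yhi \<le> (m1 - a) / p1 \<and> (m1 - a) / p1 \<le> m1 / p1 - (b - real_of_ereal yhi * (p0 - p1)) / p1"
      using c2[OF hi[OF H]] H by simp
  qed
  have h2: "\<bar>ylo\<bar> \<noteq> \<infinity> \<and> \<bar>yhi\<bar> \<noteq> \<infinity> \<and> (is_interval Ysup \<or> real_of_ereal ylo \<in> Ysup \<and> real_of_ereal yhi \<in> Ysup) \<Longrightarrow> m1 / p1 - min ((b - real_of_ereal ylo * (p0 - p1)) / p1) (real_of_ereal yhi) \<le> (m1 - a) / p1 \<and> (m1 - a) / p1 \<le> m1 / p1 - max ((b - real_of_ereal yhi * (p0 - p1)) / p1) (real_of_ereal ylo)"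
  proof -
    assume as: "\<bar>ylo\<bar> \<noteq> \<infinity> \<and> \<bar>yhi\<bar> \<noteq> \<infinity> \<and> (is_interval Ysup \<or> real_of_ereal ylo \<in> Ysup \<and> real_of_ereal yhi \<in> Ysup)"
    from as obtain L where L: "ylo = ereal L" by (cases ylo) auto
    from as obtain H where H: "yhi = ereal H" by (cases yhi) auto
    show "m1 / p1 - min ((b - real_of_ereal ylo * (p0 - p1)) / p1) (real_of_ereal yhi) \<le> (m1 - a) / p1 \<and>
    (m1 - a) / p1 \<le> m1 / p1 - max ((b - real_of_ereal yhi * (p0 - p1)) / p1) (real_of_ereal ylo)"
      using c3[OF lo[OF L] hi[OF H]] L H by simp
  qed
  show ?thesis
    unfolding DOO DS
    unfolding m1_def[symmetric] b_def[symmetric] p1_def[symmetric]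
    using h0 h1 h2 by blast
qed

end
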